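(* Let $n\ge 4$ and let $L$ be an $n$-bow, i.e. a generic length vector satisfying the strict triangle inequality such that $\{n,i\}$ is long for every $i=1,\dots,n-1$. Then $\Gamma(L)$ has exactly $2^{n-1}-2$ vertices, and this is the minimal number of vertices of $\Gamma(L')$ over all generic length vectors $L'\in\mathbb{R}_{>0}^n$ satisfying the strict triangle inequality.
   Context: Let $n\ge 4$ and $L=(l_1,\dots,l_n)$ be positive reals with $l_i<\sum_{j\ne i}l_j$ for every $i$ (strict triangle inequality), and generic: there is no $J\subseteq[n]$ with $\sum_{i\in J}l_i=\sum_{i\notin J}l_i$. Here $[n]=\{1,\dots,n\}$ and $|L|=\sum_{i=1}^n l_i$. A set $I\subseteq[n]$ is short if $\sum_{i\in I}l_i<|L|/2$ and long otherwise. A cyclically ordered partition of $[n]$ into $k$ parts is a sequence $(A_1,\dots,A_k)$ of pairwise disjoint nonempty sets with union $[n]$, considered up to cyclic shifts $(A_1,\dots,A_k)\sim(A_2,\dots,A_k,A_1)$; there is no ordering inside a part. It is admissible if every part is short. The graph $\Gamma(L)$ has as vertices the admissible cyclically ordered partitions of $[n]$ into 3 parts, written $(I,J,K)$, and as edges the admissible cyclically ordered partitions into 4 parts $(A,B,C,D)$; such an edge is incident to each of the partitions $(A\cup B,C,D)$, $(A,B\cup C,D)$, $(A,B,C\cup D)$, $(D\cup A,B,C)$ that is admissible. Equivalently, two vertices are adjacent iff one is obtained from the other by moving a nonempty proper subset of one part into another part. *)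

theory Defs
  imports Complex_Main
begin

text \<open>Length vectors L = (l_1,...,l_n) are modelled as functions nat => real,
  of which only the values on {1..n} matter.\<close>

definition total_length :: "(nat \<Rightarrow> real) \<Rightarrow> nat \<Rightarrow> real" where
  "total_length L n = (\<Sum>i\<in>{1..n}. L i)"

definition short :: "(nat \<Rightarrow> real) \<Rightarrow> nat \<Rightarrow> nat set \<Rightarrow> bool" where
  "short L n I \<longleftrightarrow> (\<Sum>i\<in>I. L i) < total_length L n / 2"

definition long :: "(nat \<Rightarrow> real) \<Rightarrow> nat \<Rightarrow> nat set \<Rightarrow> bool" where
  "long L n I \<longleftrightarrow> \<not> short L n I"

definition length_vector :: "(nat \<Rightarrow> real) \<Rightarrow> nat \<Rightarrow> bool" where
  "length_vector L n \<longleftrightarrow>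
     (\<forall>i\<in>{1..n}. L i > 0) \<and>
     (\<forall>i\<in>{1..n}. L i < (\<Sum>j\<in>{1..n} - {i}. L j)) \<and>
     (\<forall>J. J \<subseteq> {1..n} \<longrightarrow> (\<Sum>i\<in>J. L i) \<noteq> (\<Sum>i\<in>{1..n} - J. L i))"

definition admissible3 :: "(nat \<Rightarrow> real) \<Rightarrow> nat \<Rightarrow> nat set \<times> nat set \<times> nat set \<Rightarrow> bool" where
  "admissible3 L n t \<longleftrightarrow> (case t of (I, J, K) \<Rightarrow>
     I \<noteq> {} \<and> J \<noteq> {} \<and> K \<noteq> {} \<and>
     I \<inter> J = {} \<and> J \<inter> K = {} \<and> I \<inter> K = {} \<and>
     I \<union> J \<union> K = {1..n} \<and>
     short L n I \<and> short L n J \<and> short L n K)"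

definition cyc_class :: "'a \<times> 'a \<times> 'a \<Rightarrow> ('a \<times> 'a \<times> 'a) set" where
  "cyc_class t = (case t of (I, J, K) \<Rightarrow> {(I, J, K), (J, K, I), (K, I, J)})"

definition Gamma_vertices :: "(nat \<Rightarrow> real) \<Rightarrow> nat \<Rightarrow> (nat set \<times> nat set \<times> nat set) set set" where
  "Gamma_vertices L n = cyc_class ` {t. admissible3 L n t}"

definition is_bow :: "(nat \<Rightarrow> real) \<Rightarrow> nat \<Rightarrow> bool" where
  "is_bow L n \<longleftrightarrow> length_vector L n \<and> (\<forall>i\<in>{1..n-1}. long L n {n, i})"

end

theory Submission
  imports Defs
begin


lemma sum_compl:
  assumes "A \<subseteq> {1..n}"
  shows "sum L A + sum L ({1..n} - A) = total_length L n"
  using sum.subset_diff[OF assms, of L] unfolding total_length_def by simp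

lemma lv_pos: "length_vector L n \<Longrightarrow> i \<in> {1..n} \<Longrightarrow> L i > 0"
  unfolding length_vector_def by blast

lemma sum_le_sub:
  assumes "length_vector L n" "B \<subseteq> {1..n}" "A \<subseteq> B"
  shows "sum L A \<le> sum L B"
proof -
  have "finite B" using assms(2) finite_subset by blast
  moreover have "\<forall>b\<in>B-A. 0 \<le> L b" using assms by (meson DiffD1 lv_pos less_imp_le subsetD)
  ultimately show ?thesis using assms(3) by (auto intro!: sum_mono2)
qed

lemma short_mono:
  assumes "length_vector L n" "B \<subseteq> {1..n}" "A \<subseteq> B" "short L n B"
  shows "short L n A"
  using sum_le_sub[OF assms(1-3)] assms(4) unfolding short_def by linarith

lemma generic_half:
  assumes "length_vector L n" "A \<subseteq> {1..n}"
  shows "sum L A \<noteq> total_length L n / 2"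
proof -
  have "sum L A \<noteq> sum L ({1..n} - A)" using assms unfolding length_vector_def by blast
  then show ?thesis using sum_compl[OF assms(2), of L] by linarith
qed

lemma long_compl_short:
  assumes "length_vector L n" "A \<subseteq> {1..n}" "\<not> short L n A"
  shows "short L n ({1..n} - A)"
  using generic_half[OF assms(1,2)] sum_compl[OF assms(2), of L] assms(3)
  unfolding short_def by linarith

lemma single_short:
  assumes "length_vector L n" "i \<in> {1..n}"
  shows "short L n {i}"
proof -
  have "L i < sum L ({1..n} - {i})" using assms unfolding length_vector_def by blast
  moreover have "sum L {i} + sum L ({1..n} - {i}) = total_length L n"
    using sum_compl[of "{i}" n L] assms(2) by simp
  ultimately show ?thesis unfolding short_def by simp
qed

lemma cyc_rot: "cyc_class (I, J, K) = cyc_class (J, K, I)"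
  unfolding cyc_class_def by auto

lemma cyc_inj:
  assumes "I1 \<inter> J1 = {}" "I1 \<inter> K1 = {}" "I2 \<inter> J2 = {}" "I2 \<inter> K2 = {}"
    "m \<in> I1" "m \<in> I2" "cyc_class (I1, J1, K1) = cyc_class (I2, J2, K2)"
  shows "(I1, J1, K1) = (I2, J2, K2)"
proof -
  have "(I1, J1, K1) \<in> cyc_class (I1, J1, K1)" unfolding cyc_class_def by simp
  then have "(I1, J1, K1) \<in> cyc_class (I2, J2, K2)" using assms(7) by simp
  then have "(I1, J1, K1) = (I2, J2, K2) \<or> (I1, J1, K1) = (J2, K2, I2) \<or> (I1, J1, K1) = (K2, I2, J2)"
    unfolding cyc_class_def by simp
  moreover have "I1 \<noteq> J2" using assms(3,5,6) by blast
  moreover have "I1 \<noteq> K2" using assms(4,5,6) by blast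
  ultimately show ?thesis by auto
qed

lemma greedy:
  assumes "finite D" "\<forall>x\<in>D. 0 < f x \<and> f x \<le> c" "0 \<le> a" "a < sum f D"
  shows "\<exists>V\<subseteq>D. a < sum f V \<and> sum f V \<le> a + (c::real)"
  using assms
proof (induction D rule: finite_induct)
  case empty
  then show ?case by simp
next
  case (insert x F)
  show ?case
  proof (cases "a < sum f F")
    case True
    then obtain V where "V \<subseteq> F" "a < sum f V" "sum f V \<le> a + c" using insert by auto
    then show ?thesis by blast
  next
    case False
    have "sum f (insert x F) = f x + sum f F" using insert by simp
    then show ?thesis using False insert.prems by (intro exI[of _ "insert x F"]) auto
  qed
qed

lemma finite_Gamma: "finite (Gamma_vertices L n)"
proof -
  have "{t. admissible3 L n t} \<subseteq> Pow {1..n} \<times> Pow {1..n} \<times> Pow {1..n}"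
    unfolding admissible3_def by auto
  then have "finite {t. admissible3 L n t}" by (rule finite_subset) auto
  then show ?thesis unfolding Gamma_vertices_def by simp
qed

lemma card_S:
  assumes "finite R" "R \<noteq> {}"
  shows "card (Pow R - {{}, R}) = 2 ^ card R - 2"
proof -
  have "card (Pow R - {{}, R}) = card (Pow R) - card {{}, R}"
    by (rule card_Diff_subset) auto
  then show ?thesis using assms by (simp add: card_Pow)
qed



lemma split_exists:
  assumes lv: "length_vector L n" and m: "m \<in> {1..n}" "\<forall>i\<in>{1..n}. L i \<le> L m"
    and D: "D \<subseteq> {1..n} - {m}" "D \<noteq> {1..n} - {m}" "\<not> short L n D"
  shows "\<exists>V. V \<subseteq> D \<and> V \<noteq> {} \<and> short L n V \<and> short L n (D - V)"
proof -
  define T where "T = total_length L n"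
  have hD: "T/2 \<le> sum L D" using D(3) unfolding short_def T_def by simp
  obtain y where y: "y \<in> {1..n} - {m}" "y \<notin> D" using D by blast
  have sub: "insert m (insert y D) \<subseteq> {1..n}" using D y m by auto
  have fD: "finite D" using D(1) finite_subset by blast
  have "sum L (insert m (insert y D)) \<le> sum L {1..n}"
    using sum_le_sub[OF lv order_refl sub] .
  moreover have "sum L (insert m (insert y D)) = L m + (L y + sum L D)"
  proof -
    have "m \<notin> insert y D" using D(1) y by auto
    then show ?thesis using fD y by simp
  qed
  moreover have "L y > 0" using lv y lv_pos by blast
  moreover have "L m > 0" using lv m lv_pos by blast
  ultimately have lt: "sum L D + L m < T" and Tpos: "T > 0"
    using hD unfolding T_def total_length_def by linarith+
  have pos: "\<forall>x\<in>D. 0 < L x \<and> L x \<le> L m" using D(1) m(2) lv lv_pos by blast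
  obtain V where V: "V \<subseteq> D" "sum L D - T/2 < sum L V" "sum L V \<le> sum L D - T/2 + L m"
    using greedy[OF fD pos, of "sum L D - T/2"] hD Tpos by auto
  have "V \<noteq> {}" using V hD by auto
  moreover have "short L n V" using V lt unfolding short_def T_def[symmetric] by linarith
  moreover have "sum L (D - V) = sum L D - sum L V" using sum_diff[OF fD V(1)] .
  then have "short L n (D - V)" using V unfolding short_def T_def[symmetric] by linarith
  ultimately show ?thesis using V(1) by blast
qed



lemma lower_bound:
  assumes lv: "length_vector L n" and n2: "n \<ge> 2"
  shows "2 ^ (n - 1) - 2 \<le> card (Gamma_vertices L n)"
proof -
  have fin1: "finite (L ` {1..n})" and ne1: "L ` {1..n} \<noteq> {}" using n2 by auto
  obtain m where m1: "m \<in> {1..n}" and m1': "L m = Max (L ` {1..n})"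
    using Max_in[OF fin1 ne1] by auto
  have m2: "\<forall>i\<in>{1..n}. L i \<le> L m" using m1' fin1 by auto
  define R where "R = {1..n} - {m}"
  define S where "S = Pow R - {{}, R}"
  have finR: "finite R" unfolding R_def by simp
  have mR: "m \<notin> R" unfolding R_def by simp
  have Rsub: "R \<subseteq> {1..n}" unfolding R_def by auto
  have cardR: "card R = n - 1" unfolding R_def using m1 by simp
  have Rne: "R \<noteq> {}"
  proof
    assume "R = {}"
    then have "card R = 0" by simp
    then show False using cardR n2 by simp
  qed
  have cardS: "card S = 2 ^ (n - 1) - 2" unfolding S_def using card_S[OF finR Rne] cardR by simp
  define T where "T = total_length L n"
  have sumR: "L m + sum L R = T"
    using sum_compl[of "{m}" n L] m1 unfolding R_def T_def by simp
  have Lm: "L m > 0" using lv m1 lv_pos by blast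
  have notboth: "short L n X \<or> short L n (R - X)" if "X \<subseteq> R" for X
  proof -
    have "sum L R = sum L (R - X) + sum L X" using sum.subset_diff[OF that finR] .
    then show ?thesis using sumR Lm unfolding short_def T_def[symmetric] by linarith
  qed
  define sp where "sp D = (SOME V. V \<subseteq> D \<and> V \<noteq> {} \<and> short L n V \<and> short L n (D - V))" for D
  have spD: "sp D \<subseteq> D \<and> sp D \<noteq> {} \<and> short L n (sp D) \<and> short L n (D - sp D)"
    if "D \<subseteq> R" "D \<noteq> R" "\<not> short L n D" for D
  proof -
    have "\<exists>V. V \<subseteq> D \<and> V \<noteq> {} \<and> short L n V \<and> short L n (D - V)"
      using split_exists[OF lv m1 m2] that unfolding R_def by blast
    then show ?thesis unfolding sp_def by (rule someI_ex)
  qed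
  define tau where "tau X = (if short L n X \<and> short L n (R - X) then ({m}, X, R - X)
      else if \<not> short L n X then ({m} \<union> (R - X), sp X, X - sp X)
      else ({m} \<union> X, (R - X) - sp (R - X), sp (R - X)))" for X
  have compl1: "{m} \<union> (R - X) = {1..n} - X" if "X \<subseteq> R" for X
    using that m1 unfolding R_def by auto
  have compl2: "{m} \<union> X = {1..n} - (R - X)" if "X \<subseteq> R" for X
    using that m1 unfolding R_def by auto
  have adm: "admissible3 L n (tau X) \<and> m \<in> fst (tau X) \<and>
      (fst (tau X) = {m} \<longleftrightarrow> short L n X \<and> short L n (R - X))" if XS: "X \<in> S" for X
  proof -
    have XR: "X \<subseteq> R" "X \<noteq> {}" "X \<noteq> R" using XS unfolding S_def by auto
    have RX: "R - X \<noteq> {}" using XR by auto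
    have Xsub: "X \<subseteq> {1..n}" using XR Rsub by auto
    show ?thesis
    proof (cases "short L n X \<and> short L n (R - X)")
      case True
      then have t: "tau X = ({m}, X, R - X)" unfolding tau_def by simp
      have "{m} \<union> X \<union> (R - X) = {1..n}" using XR m1 unfolding R_def by auto
      then show ?thesis unfolding t admissible3_def using True XR RX mR single_short[OF lv m1]
        by auto
    next
      case False
      show ?thesis
      proof (cases "short L n X")
        case sX: False
        then have t: "tau X = ({m} \<union> (R - X), sp X, X - sp X)" unfolding tau_def by simp
        have sp: "sp X \<subseteq> X" "sp X \<noteq> {}" "short L n (sp X)" "short L n (X - sp X)"
          using spD[OF XR(1) XR(3) sX] by auto
        have "sp X \<noteq> X" using sp(3) sX by auto
        then have ne: "X - sp X \<noteq> {}" using sp(1) by auto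
        have s1: "short L n ({m} \<union> (R - X))"
          using long_compl_short[OF lv Xsub sX] compl1[OF XR(1)] by simp
        have "{m} \<union> (R - X) \<union> sp X \<union> (X - sp X) = {1..n}" using XR sp(1) m1 unfolding R_def by auto
        moreover have "{m} \<union> (R - X) \<noteq> {m}" using RX mR by auto
        ultimately show ?thesis unfolding t admissible3_def using sp ne s1 XR mR sX
          by auto
      next
        case sX: True
        then have sRX: "\<not> short L n (R - X)" using False by simp
        then have t: "tau X = ({m} \<union> X, (R - X) - sp (R - X), sp (R - X))"
          unfolding tau_def using sX by simp
        have D: "R - X \<subseteq> R" "R - X \<noteq> R" using XR by auto
        have RXsub: "R - X \<subseteq> {1..n}" using Rsub by auto
        have sp: "sp (R - X) \<subseteq> R - X" "sp (R - X) \<noteq> {}" "short L n (sp (R - X))"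
            "short L n ((R - X) - sp (R - X))"
          using spD[OF D sRX] by auto
        have "sp (R - X) \<noteq> R - X" using sp(3) sRX by auto
        then have ne: "(R - X) - sp (R - X) \<noteq> {}" using sp(1) by auto
        have s1: "short L n ({m} \<union> X)"
          using long_compl_short[OF lv RXsub sRX] compl2[OF XR(1)] by simp
        have "{m} \<union> X \<union> ((R - X) - sp (R - X)) \<union> sp (R - X) = {1..n}"
          using XR sp(1) m1 unfolding R_def by auto
        moreover have "{m} \<union> X \<noteq> {m}" using XR mR by auto
        ultimately show ?thesis unfolding t admissible3_def using sp ne s1 XR mR False
          by auto
      qed
    qed
  qed
  have tau_inj: "X = Y" if XS: "X \<in> S" and YS: "Y \<in> S" and eq: "tau X = tau Y" for X Y
  proof -
    have XR: "X \<subseteq> R" "X \<noteq> {}" "X \<noteq> R" using XS unfolding S_def by auto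
    have YR: "Y \<subseteq> R" "Y \<noteq> {}" "Y \<noteq> R" using YS unfolding S_def by auto
    have fst_eq: "fst (tau X) = {m} \<longleftrightarrow> fst (tau Y) = {m}" using eq by simp
    have aX: "admissible3 L n (tau X)" using adm[OF XS] by simp
    show ?thesis
    proof (cases "short L n X \<and> short L n (R - X)")
      case True
      then have "short L n Y \<and> short L n (R - Y)" using fst_eq adm[OF XS] adm[OF YS] by simp
      then show ?thesis using True eq unfolding tau_def by simp
    next
      case F: False
      have "fst (tau X) \<noteq> {m}" using adm[OF XS] F by blast
      then have "fst (tau Y) \<noteq> {m}" using fst_eq by blast
      then have F2: "\<not> (short L n Y \<and> short L n (R - Y))" using adm[OF YS] by blast
      have u1: "fst (snd (tau X)) \<union> snd (snd (tau X)) = (if short L n X then R - X else X)"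
      proof (cases "short L n X")
        case True
        then have nn: "\<not> short L n (R - X)" using F by simp
        have r1: "R - X \<subseteq> R" and r2: "R - X \<noteq> R" using XR by auto
        have "sp (R - X) \<subseteq> R - X" using spD[OF r1 r2 nn] by (rule conjunct1)
        then have uu: "((R - X) - sp (R - X)) \<union> sp (R - X) = R - X" by blast
        have "tau X = ({m} \<union> X, (R - X) - sp (R - X), sp (R - X))"
          unfolding tau_def using True nn by simp
        then show ?thesis using uu True by simp
      next
        case False
        have "sp X \<subseteq> X" using spD[OF XR(1) XR(3) False] by (rule conjunct1)
        then have uu: "sp X \<union> (X - sp X) = X" by blast
        have "tau X = ({m} \<union> (R - X), sp X, X - sp X)"
          unfolding tau_def using False by simp
        then show ?thesis using uu False by simp
      qed
      have u2: "fst (snd (tau Y)) \<union> snd (snd (tau Y)) = (if short L n Y then R - Y else Y)"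
      proof (cases "short L n Y")
        case True
        then have nn: "\<not> short L n (R - Y)" using F2 by simp
        have r1: "R - Y \<subseteq> R" and r2: "R - Y \<noteq> R" using YR by auto
        have "sp (R - Y) \<subseteq> R - Y" using spD[OF r1 r2 nn] by (rule conjunct1)
        then have uu: "((R - Y) - sp (R - Y)) \<union> sp (R - Y) = R - Y" by blast
        have "tau Y = ({m} \<union> Y, (R - Y) - sp (R - Y), sp (R - Y))"
          unfolding tau_def using True nn by simp
        then show ?thesis using uu True by simp
      next
        case False
        have "sp Y \<subseteq> Y" using spD[OF YR(1) YR(3) False] by (rule conjunct1)
        then have uu: "sp Y \<union> (Y - sp Y) = Y" by blast
        have "tau Y = ({m} \<union> (R - Y), sp Y, Y - sp Y)"
          unfolding tau_def using False by simp
        then show ?thesis using uu False by simp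
      qed
      have dj: "fst (snd (tau X)) \<inter> snd (snd (tau X)) = {}"
      proof -
        obtain I J K where tX: "tau X = (I, J, K)" by (cases "tau X") auto
        have "J \<inter> K = {}" using aX unfolding tX admissible3_def by simp
        then show ?thesis using tX by simp
      qed
      have hv1: "fst (snd (tau X)) = fst (snd (tau Y))" using eq by simp
      have hv2: "snd (snd (tau X)) = snd (snd (tau Y))" using eq by simp
      show ?thesis
      proof (cases "short L n X")
        case sX: True
        have u1': "fst (snd (tau X)) \<union> snd (snd (tau X)) = R - X" using u1 sX by simp
        have tX2: "snd (snd (tau X)) = sp (R - X)"
          unfolding tau_def using F sX by simp
        show ?thesis
        proof (cases "short L n Y")
          case True
          have u2': "fst (snd (tau Y)) \<union> snd (snd (tau Y)) = R - Y" using u2 True by simp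
          have "R - X = R - Y" using u1' u2' hv1 hv2 by (simp only:)
          then show ?thesis using XR(1) YR(1) by blast
        next
          case sY: False
          have u2': "fst (snd (tau Y)) \<union> snd (snd (tau Y)) = Y" using u2 sY by simp
          have D: "R - X = Y" using u1' u2' hv1 hv2 by (simp only:)
          have tY1: "fst (snd (tau Y)) = sp Y" unfolding tau_def using sY by simp
          have "fst (snd (tau X)) = sp Y" using tY1 hv1 by simp
          moreover have "snd (snd (tau X)) = sp Y" using tX2 D by (simp only:)
          ultimately have "sp Y = {}" using dj by simp
          then show ?thesis using spD[OF YR(1) YR(3) sY] by simp
        qed
      next
        case sX: False
        have u1': "fst (snd (tau X)) \<union> snd (snd (tau X)) = X" using u1 sX by simp
        have tX1: "fst (snd (tau X)) = sp X" unfolding tau_def using sX by simp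
        show ?thesis
        proof (cases "short L n Y")
          case sY: True
          have u2': "fst (snd (tau Y)) \<union> snd (snd (tau Y)) = R - Y" using u2 sY by simp
          have "X = fst (snd (tau X)) \<union> snd (snd (tau X))" using u1' by (rule sym)
          also have "\<dots> = fst (snd (tau Y)) \<union> snd (snd (tau Y))" using hv1 hv2 by (rule arg_cong2[where f="(\<union>)"])
          also have "\<dots> = R - Y" by (rule u2')
          finally have D: "X = R - Y" .
          have tY2: "snd (snd (tau Y)) = sp (R - Y)"
            unfolding tau_def using F2 sY by simp
          have e1: "snd (snd (tau X)) = sp (R - Y)" using hv2 tY2 by (rule trans)
          have e2: "sp (R - Y) = sp X" using D by (rule arg_cong[OF sym])
          have "fst (snd (tau X)) \<inter> snd (snd (tau X)) = sp X \<inter> sp X" by (simp only: tX1 e1 e2)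
          then have "sp X \<inter> sp X = {}" using dj by (rule subst)
          then have "sp X = {}" by simp
          then show ?thesis using spD[OF XR(1) XR(3) sX] by simp
        next
          case sY: False
          have u2': "fst (snd (tau Y)) \<union> snd (snd (tau Y)) = Y" using u2 sY by simp
          have "X = fst (snd (tau X)) \<union> snd (snd (tau X))" using u1' by (rule sym)
          also have "\<dots> = fst (snd (tau Y)) \<union> snd (snd (tau Y))" using hv1 hv2 by (rule arg_cong2[where f="(\<union>)"])
          also have "\<dots> = Y" by (rule u2')
          finally show ?thesis .
        qed
      qed
    qed
  qed
  have inj: "inj_on (\<lambda>X. cyc_class (tau X)) S"
  proof (rule inj_onI)
    fix X Y assume XS: "X \<in> S" and YS: "Y \<in> S" and e: "cyc_class (tau X) = cyc_class (tau Y)"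
    obtain I1 J1 K1 where t1: "tau X = (I1, J1, K1)" by (cases "tau X") auto
    obtain I2 J2 K2 where t2: "tau Y = (I2, J2, K2)" by (cases "tau Y") auto
    have a1: "admissible3 L n (I1, J1, K1)" "m \<in> I1" using adm[OF XS] t1 by auto
    have a2: "admissible3 L n (I2, J2, K2)" "m \<in> I2" using adm[OF YS] t2 by auto
    have d1: "I1 \<inter> J1 = {}" "I1 \<inter> K1 = {}" using a1(1) unfolding admissible3_def by auto
    have d2: "I2 \<inter> J2 = {}" "I2 \<inter> K2 = {}" using a2(1) unfolding admissible3_def by auto
    have e': "cyc_class (I1, J1, K1) = cyc_class (I2, J2, K2)" using e t1 t2 by simp
    have "(I1, J1, K1) = (I2, J2, K2)" using cyc_inj[OF d1 d2 a1(2) a2(2) e'] .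
    then show "X = Y" using tau_inj[OF XS YS] t1 t2 by simp
  qed
  have img: "(\<lambda>X. cyc_class (tau X)) ` S \<subseteq> Gamma_vertices L n"
    unfolding Gamma_vertices_def using adm by auto
  have "card S \<le> card (Gamma_vertices L n)"
    using card_inj_on_le[OF inj img finite_Gamma] .
  then show ?thesis using cardS by simp
qed



lemma adm_rot: "admissible3 L n (I, J, K) \<Longrightarrow> admissible3 L n (J, K, I)"
  unfolding admissible3_def by auto

lemma bow_count:
  assumes n2: "n \<ge> 2" and bow: "is_bow L n"
  shows "card (Gamma_vertices L n) = 2 ^ (n - 1) - 2"
proof -
  have lv: "length_vector L n" using bow unfolding is_bow_def by simp
  have pl: "\<not> short L n {n, i}" if "i \<in> {1..n-1}" for i
    using bow that unfolding is_bow_def long_def by blast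
  define R where "R = {1..n} - {n}"
  define S where "S = Pow R - {{}, R}"
  have finR: "finite R" unfolding R_def by simp
  have nR: "n \<notin> R" unfolding R_def by simp
  have n1: "n \<in> {1..n}" using n2 by simp
  have Rsub: "R \<subseteq> {1..n}" unfolding R_def by auto
  have R1: "R = {1..n-1}" unfolding R_def using n2 by auto
  have cardR: "card R = n - 1" unfolding R_def using n1 by simp
  have Rne: "R \<noteq> {}"
  proof
    assume "R = {}"
    then have "card R = 0" by simp
    then show False using cardR n2 by simp
  qed
  have cardS: "card S = 2 ^ (n - 1) - 2" unfolding S_def using card_S[OF finR Rne] cardR by simp
  have shortsub: "short L n X" if "X \<subseteq> R" "i \<in> R" "i \<notin> X" for X i
  proof -
    have i1: "i \<in> {1..n-1}" using that R1 by simp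
    have sub: "{n, i} \<subseteq> {1..n}" using i1 n1 by auto
    have "short L n ({1..n} - {n, i})" using long_compl_short[OF lv sub pl[OF i1]] .
    moreover have "X \<subseteq> {1..n} - {n, i}" using that R_def by auto
    ultimately show ?thesis using short_mono[OF lv, of "{1..n} - {n, i}" X] by auto
  qed
  define f where "f X = cyc_class ({n}, X, R - X)" for X
  have admf: "admissible3 L n ({n}, X, R - X)" if "X \<in> S" for X
  proof -
    have XR: "X \<subseteq> R" "X \<noteq> {}" "X \<noteq> R" using that unfolding S_def by auto
    obtain i where i: "i \<in> R" "i \<notin> X" using XR by auto
    obtain j where j: "j \<in> X" using XR by auto
    have s1: "short L n X" using shortsub[OF XR(1) i] .
    have s2: "short L n (R - X)" using shortsub[of "R - X" j] j XR by auto
    have "{n} \<union> X \<union> (R - X) = {1..n}" using XR n1 unfolding R_def by auto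
    then show ?thesis unfolding admissible3_def using s1 s2 XR nR single_short[OF lv n1] by auto
  qed
  have part_n: "P = {n}" if PP: "P \<subseteq> {1..n}" "n \<in> P" "short L n P" for P
  proof (rule ccontr)
    assume "P \<noteq> {n}"
    then obtain i where i: "i \<in> P" "i \<noteq> n" using PP by auto
    have "i \<in> {1..n}" using PP(1) i(1) by blast
    then have i1: "i \<in> {1..n-1}" using i(2) by auto
    have "short L n {n, i}" using short_mono[OF lv PP(1), of "{n, i}"] PP i by auto
    then show False using pl[OF i1] by simp
  qed
  have first: "cyc_class (I, J, K) \<in> f ` S" if a: "admissible3 L n (I, J, K)" and nI: "n \<in> I" for I J K
  proof -
    have props: "I \<noteq> {}" "J \<noteq> {}" "K \<noteq> {}" "I \<inter> J = {}" "J \<inter> K = {}" "I \<inter> K = {}"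
       "I \<union> J \<union> K = {1..n}" "short L n I"
      using a unfolding admissible3_def by auto
    have I: "I = {n}" using part_n[of I] props nI by auto
    have KJ: "K = R - J" using props I unfolding R_def by auto
    have "J \<in> S" using props I unfolding S_def R_def by auto
    then show ?thesis unfolding f_def using I KJ by auto
  qed
  have eqG: "Gamma_vertices L n = f ` S"
  proof
    show "f ` S \<subseteq> Gamma_vertices L n"
      unfolding Gamma_vertices_def f_def using admf by auto
  next
    show "Gamma_vertices L n \<subseteq> f ` S"
    proof
      fix v assume "v \<in> Gamma_vertices L n"
      then obtain I J K where a: "admissible3 L n (I, J, K)" and v: "v = cyc_class (I, J, K)"
        unfolding Gamma_vertices_def by auto
      have nn: "n \<in> I \<union> J \<union> K" using a n1 unfolding admissible3_def by auto
      have e2: "v = cyc_class (J, K, I)" using v cyc_rot[of I J K] by simp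
      have e3: "v = cyc_class (K, I, J)" using e2 cyc_rot[of J K I] by simp
      have a2: "admissible3 L n (J, K, I)" using adm_rot[OF a] .
      have a3: "admissible3 L n (K, I, J)" using adm_rot[OF a2] .
      show "v \<in> f ` S"
      proof (cases "n \<in> I")
        case True then show ?thesis using first[OF a] v by simp
      next
        case nI: False
        show ?thesis
        proof (cases "n \<in> J")
          case True then show ?thesis using first[OF a2] e2 by simp
        next
          case False
          then have "n \<in> K" using nn nI by blast
          then show ?thesis using first[OF a3] e3 by simp
        qed
      qed
    qed
  qed
  have inj: "inj_on f S"
  proof (rule inj_onI)
    fix X Y assume XS: "X \<in> S" and YS: "Y \<in> S" and e: "f X = f Y"
    have d1: "{n} \<inter> X = {}" "{n} \<inter> (R - X) = {}" using nR XS unfolding S_def by auto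
    have d2: "{n} \<inter> Y = {}" "{n} \<inter> (R - Y) = {}" using nR YS unfolding S_def by auto
    have e': "cyc_class ({n}, X, R - X) = cyc_class ({n}, Y, R - Y)" using e unfolding f_def .
    have "({n}, X, R - X) = ({n}, Y, R - Y)" using cyc_inj[OF d1 d2 _ _ e'] by simp
    then show "X = Y" by simp
  qed
  show ?thesis using eqG card_image[OF inj] cardS by simp
qed


theorem mainTheorem2:
  fixes L :: "nat \<Rightarrow> real" and n :: nat
  assumes "n \<ge> 4" and "is_bow L n"
  shows "card (Gamma_vertices L n) = 2 ^ (n - 1) - 2 \<and>
         (\<forall>L' :: nat \<Rightarrow> real. length_vector L' n \<longrightarrow>
            card (Gamma_vertices L n) \<le> card (Gamma_vertices L' n))"
proof -
  have n2: "n \<ge> 2" using assms(1) by simp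
  have c: "card (Gamma_vertices L n) = 2 ^ (n - 1) - 2" using bow_count[OF n2 assms(2)] .
  have "\<forall>L' :: nat \<Rightarrow> real. length_vector L' n \<longrightarrow>
            card (Gamma_vertices L n) \<le> card (Gamma_vertices L' n)"
    using lower_bound[OF _ n2] c by simp
  then show ?thesis using c by simp
qed

end
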